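(* Assume the setting and the CRAIG recurrence described in the context, and let $k\ge1$ be such that $q_1,\dots,q_k$, $v_1,\dots,v_k$, $t_1,\dots,t_k$, $r_1,\dots,r_k$, $\alpha_1,\dots,\alpha_k$, $\beta_2,\dots,\beta_k$ and $g_k$ are defined. Define $Q_k=[q_1,\dots,q_k]$, $V_k=[v_1,\dots,v_k]$, $T_k=[t_1,\dots,t_k]$, $D_k=[r_1/\alpha_1,\dots,r_k/\alpha_k]$, and let $B_k\in\mathbb{R}^{k\times k}$ be upper bidiagonal with diagonal entries $(B_k)_{ii}=\alpha_i$ and superdiagonal entries $(B_k)_{i,i+1}=\beta_{i+1}$. Then $Q_k=D_kB_k$, $AQ_k=MV_kB_k$, $CQ_k=T_kB_k$, $V_k^TMV_k+D_k^TT_k=I_k$, $Q_k^TNQ_k=I_k$, and $A^TV_k+T_k=NQ_kB_k^T+Ng_ke_k^T$, where $e_k$ is the $k$-th unit vector in $\mathbb{R}^k$. Consequently, with $S=A^TM^{-1}A+C$, $N^{-1}SQ_k=Q_k(B_k^TB_k)+\alpha_k g_ke_k^T$, i.e. the recurrence implicitly performs the Lanczos tridiagonalization of the preconditioned Schur complement.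
   Context: Setting: $M\in\mathbb{R}^{m\times m}$ is symmetric positive definite, $A\in\mathbb{R}^{m\times n}$ ($n\le m$) has full column rank, $C\in\mathbb{R}^{n\times n}$ is symmetric positive semidefinite, $b\in\mathbb{R}^n$ is nonzero, and $N\in\mathbb{R}^{n\times n}$ is symmetric positive definite (the preconditioner). For a symmetric positive definite $G$ write $\|x\|_G=(x^TGx)^{1/2}$. The generalized saddle point system is $Mu+Ap=0$, $A^Tu-Cp=b$, with unique solution $(u_*,p_* )$; $S=A^TM^{-1}A+C$. CRAIG recurrence (exact arithmetic): Initialization: $\beta_1=\|b\|_{N^{-1}}$, $q_1=N^{-1}b/\beta_1$, $r_1=q_1$, $w_1=M^{-1}Aq_1$, $s_1=Cr_1$, $\alpha_1=(w_1^TMw_1+r_1^Ts_1)^{1/2}$, $v_1=w_1/\alpha_1$, $t_1=s_1/\alpha_1$, $\zeta_1=\beta_1/\alpha_1$, $u^{(1)}=\zeta_1v_1$, $p^{(1)}=-(\zeta_1/\alpha_1)r_1$. For $k=1,2,\dots$: $g_k=N^{-1}(A^Tv_k+t_k)-\alpha_kq_k$, $\beta_{k+1}=\|g_k\|_N$; if $\beta_{k+1}=0$ the recurrence stops; otherwise $q_{k+1}=g_k/\beta_{k+1}$, $w_{k+1}=M^{-1}Aq_{k+1}-\beta_{k+1}v_k$, $r_{k+1}=q_{k+1}-(\beta_{k+1}/\alpha_k)r_k$, $s_{k+1}=Cr_{k+1}$, $\alpha_{k+1}=(w_{k+1}^TMw_{k+1}+r_{k+1}^Ts_{k+1})^{1/2}$,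 $v_{k+1}=w_{k+1}/\alpha_{k+1}$, $t_{k+1}=s_{k+1}/\alpha_{k+1}$, $\zeta_{k+1}=-(\beta_{k+1}/\alpha_{k+1})\zeta_k$, $u^{(k+1)}=u^{(k)}+\zeta_{k+1}v_{k+1}$, $p^{(k+1)}=p^{(k)}-(\zeta_{k+1}/\alpha_{k+1})r_{k+1}$. *)

theory Defs
  imports "Jordan_Normal_Form.Matrix"
begin

definition minv :: "real mat \<Rightarrow> real mat" where
  "minv G = (SOME X. X \<in> carrier_mat (dim_row G) (dim_row G) \<and>
              G * X = 1\<^sub>m (dim_row G) \<and> X * G = 1\<^sub>m (dim_row G))"

definition spd :: "nat \<Rightarrow> real mat \<Rightarrow> bool" where
  "spd d G \<longleftrightarrow> G \<in> carrier_mat d d \<and> transpose_mat G = G \<and>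
     (\<forall>x\<in>carrier_vec d. x \<noteq> 0\<^sub>v d \<longrightarrow> x \<bullet> (G *\<^sub>v x) > 0)"

definition spsd :: "nat \<Rightarrow> real mat \<Rightarrow> bool" where
  "spsd d G \<longleftrightarrow> G \<in> carrier_mat d d \<and> transpose_mat G = G \<and>
     (\<forall>x\<in>carrier_vec d. x \<bullet> (G *\<^sub>v x) \<ge> 0)"

definition full_col_rank :: "nat \<Rightarrow> nat \<Rightarrow> real mat \<Rightarrow> bool" where
  "full_col_rank m n A \<longleftrightarrow> A \<in> carrier_mat m n \<and>
     (\<forall>x\<in>carrier_vec n. A *\<^sub>v x = 0\<^sub>v m \<longrightarrow> x = 0\<^sub>v n)"

definition gnorm :: "real mat \<Rightarrow> real vec \<Rightarrow> real" where
  "gnorm G x = sqrt (x \<bullet> (G *\<^sub>v x))"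

record craig_state =
  cq :: "real vec"
  cw :: "real vec"
  cr :: "real vec"
  cs :: "real vec"
  calpha :: real
  cv :: "real vec"
  ct :: "real vec"
  cbeta :: real
  czeta :: real
  cu :: "real vec"
  cp :: "real vec"

(* craig M A C N b j = iterates with index j+1 (0-based storage of 1-based index).
   Division by zero is HOL's x/0 = 0; the theorem assumes the relevant quantities
   are nonzero, i.e. that the recurrence has not stopped. *)
fun craig :: "real mat \<Rightarrow> real mat \<Rightarrow> real mat \<Rightarrow> real mat \<Rightarrow> real vec \<Rightarrow> nat \<Rightarrow> craig_state"
  where
  "craig M A C N b 0 =
    (let \<beta> = gnorm (minv N) b;
         q = (1/\<beta>) \<cdot>\<^sub>v (minv N *\<^sub>v b);
         r = q;
         w = minv M *\<^sub>v (A *\<^sub>v q);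
         s = C *\<^sub>v r;
         \<alpha> = sqrt (w \<bullet> (M *\<^sub>v w) + r \<bullet> s);
         v = (1/\<alpha>) \<cdot>\<^sub>v w;
         t = (1/\<alpha>) \<cdot>\<^sub>v s;
         \<zeta> = \<beta>/\<alpha>;
         u = \<zeta> \<cdot>\<^sub>v v;
         p = (-(\<zeta>/\<alpha>)) \<cdot>\<^sub>v r
     in \<lparr>cq = q, cw = w, cr = r, cs = s, calpha = \<alpha>, cv = v, ct = t,
         cbeta = \<beta>, czeta = \<zeta>, cu = u, cp = p\<rparr>)"
| "craig M A C N b (Suc j) =
    (let st = craig M A C N b j;
         g = minv N *\<^sub>v (transpose_mat A *\<^sub>v cv st + ct st) - calpha st \<cdot>\<^sub>v cq st;
         \<beta> = gnorm N g;
         q = (1/\<beta>) \<cdot>\<^sub>v g;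
         w = minv M *\<^sub>v (A *\<^sub>v q) - \<beta> \<cdot>\<^sub>v cv st;
         r = q - (\<beta> / calpha st) \<cdot>\<^sub>v cr st;
         s = C *\<^sub>v r;
         \<alpha> = sqrt (w \<bullet> (M *\<^sub>v w) + r \<bullet> s);
         v = (1/\<alpha>) \<cdot>\<^sub>v w;
         t = (1/\<alpha>) \<cdot>\<^sub>v s;
         \<zeta> = -(\<beta>/\<alpha>) * czeta st;
         u = cu st + \<zeta> \<cdot>\<^sub>v v;
         p = cp st - (\<zeta>/\<alpha>) \<cdot>\<^sub>v r
     in \<lparr>cq = q, cw = w, cr = r, cs = s, calpha = \<alpha>, cv = v, ct = t,
         cbeta = \<beta>, czeta = \<zeta>, cu = u, cp = p\<rparr>)"

(* g_j (1-based j), computed from the state with index j *)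
definition craig_g :: "real mat \<Rightarrow> real mat \<Rightarrow> real mat \<Rightarrow> real mat \<Rightarrow> real vec \<Rightarrow> nat \<Rightarrow> real vec"
  where "craig_g M A C N b j =
    (let st = craig M A C N b (j - 1) in
       minv N *\<^sub>v (transpose_mat A *\<^sub>v cv st + ct st) - calpha st \<cdot>\<^sub>v cq st)"

end

theory Submission
  imports Defs "Jordan_Normal_Form.Determinant"
begin

lemma spd_inv:
  assumes "spd d G"
  shows "minv G \<in> carrier_mat d d \<and> G * minv G = 1\<^sub>m d \<and> minv G * G = 1\<^sub>m d"
proof -
  have G: "G \<in> carrier_mat d d" using assms unfolding spd_def by auto
  have "det G \<noteq> 0"
  proof
    assume "det G = 0"
    then obtain v where v: "v \<in> carrier_vec d" "v \<noteq> 0\<^sub>v d" "G *\<^sub>v v = 0\<^sub>v d"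
      using det_0_iff_vec_prod_zero[OF G] by auto
    have "v \<bullet> (G *\<^sub>v v) > 0" using assms v unfolding spd_def by auto
    thus False using v by simp
  qed
  from det_non_zero_imp_unit[OF G this, of undefined]
  obtain X where X: "X \<in> carrier_mat d d" "G * X = 1\<^sub>m d" "X * G = 1\<^sub>m d"
    unfolding Units_def ring_mat_def by auto
  have "\<exists>X. X \<in> carrier_mat (dim_row G) (dim_row G) \<and>
              G * X = 1\<^sub>m (dim_row G) \<and> X * G = 1\<^sub>m (dim_row G)"
    using X G by auto
  from someI_ex[OF this] show ?thesis using G unfolding minv_def by auto
qed

lemma sym_sp:
  fixes G :: "real mat"
  assumes G: "G \<in> carrier_mat d d" and s: "transpose_mat G = G"
    and x: "x \<in> carrier_vec d" and y: "y \<in> carrier_vec d"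
  shows "x \<bullet> (G *\<^sub>v y) = y \<bullet> (G *\<^sub>v x)"
proof -
  have "x \<bullet> (G *\<^sub>v y) = (transpose_mat G *\<^sub>v x) \<bullet> y"
    using transpose_vec_mult_scalar[OF G y x] by simp
  also have "\<dots> = y \<bullet> (G *\<^sub>v x)" unfolding s
    by (rule comm_scalar_prod[of _ d], insert G x y, auto)
  finally show ?thesis .
qed

lemma adj_sp:
  fixes A :: "real mat"
  assumes A: "A \<in> carrier_mat m n" and x: "x \<in> carrier_vec n" and y: "y \<in> carrier_vec m"
  shows "x \<bullet> (transpose_mat A *\<^sub>v y) = (A *\<^sub>v x) \<bullet> y"
proof -
  have "x \<bullet> (transpose_mat A *\<^sub>v y) = (transpose_mat A *\<^sub>v y) \<bullet> x"
    by (rule comm_scalar_prod[of _ n], insert A x y, auto)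
  also have "\<dots> = y \<bullet> (A *\<^sub>v x)" by (rule transpose_vec_mult_scalar[OF A x y])
  also have "\<dots> = (A *\<^sub>v x) \<bullet> y"
    by (rule comm_scalar_prod[of _ m], insert A x y, auto)
  finally show ?thesis .
qed


lemma sym_sp2:
  fixes G :: "real mat"
  assumes G: "G \<in> carrier_mat d d" and s: "transpose_mat G = G"
    and x: "x \<in> carrier_vec d" and y: "y \<in> carrier_vec d"
  shows "(G *\<^sub>v x) \<bullet> y = x \<bullet> (G *\<^sub>v y)"
  using transpose_vec_mult_scalar[OF G y x] s by simp


lemma sumB1:
  fixes h a :: "nat \<Rightarrow> real"
  assumes "j < k"
  shows "(\<Sum>l = 0..<k. h l * (if j = l then a l else if j = Suc l then c else 0)) =
    h j * a j + (if 0 < j then h (j - 1) * c else 0)"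
proof -
  have "(\<Sum>l = 0..<k. h l * (if j = l then a l else if j = Suc l then c else 0)) =
     (\<Sum>l = 0..<k. (if l = j then h j * a j else 0) + (if Suc l = j then h l * c else 0))"
    by (rule sum.cong) auto
  also have "\<dots> = h j * a j + (\<Sum>l = 0..<k. (if Suc l = j then h l * c else 0))"
    unfolding sum.distrib using assms by simp
  also have "(\<Sum>l = 0..<k. (if Suc l = j then h l * c else 0)) = (if 0 < j then h (j - 1) * c else 0)"
  proof (cases j)
    case 0 then show ?thesis by simp
  next
    case (Suc j0)
    have "(\<Sum>l = 0..<k. (if Suc l = j then h l * c else 0)) = (\<Sum>l = 0..<k. (if l = j0 then h l * c else 0))"
      by (rule sum.cong, auto simp: Suc)
    then show ?thesis using Suc assms by simp
  qed
  finally show ?thesis .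
qed

lemma sumB2:
  fixes h c :: "nat \<Rightarrow> real"
  assumes "j < k"
  shows "(\<Sum>l = 0..<k. h l * (if l = j then a else if l = Suc j then c l else 0)) =
    h j * a + (if Suc j < k then h (Suc j) * c (Suc j) else 0)"
proof -
  have "(\<Sum>l = 0..<k. h l * (if l = j then a else if l = Suc j then c l else 0)) =
     (\<Sum>l = 0..<k. (if l = j then h j * a else 0) + (if l = Suc j then h l * c l else 0))"
    by (rule sum.cong) auto
  also have "\<dots> = h j * a + (if Suc j < k then h (Suc j) * c (Suc j) else 0)"
    unfolding sum.distrib using assms by simp
  finally show ?thesis .
qed

declare craig.simps[simp del]

locale crg =
  fixes m n :: nat and M A C N :: "real mat" and b :: "real vec"
  assumes Mspd: "spd m M" and Ac: "A \<in> carrier_mat m n" and Cp: "spsd n C" and Nspd: "spd n N"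
    and bc: "b \<in> carrier_vec n" and b0: "b \<noteq> 0\<^sub>v n"
begin

abbreviation "q j \<equiv> cq (craig M A C N b j)"
abbreviation "w j \<equiv> cw (craig M A C N b j)"
abbreviation "r j \<equiv> cr (craig M A C N b j)"
abbreviation "s j \<equiv> cs (craig M A C N b j)"
abbreviation "v j \<equiv> cv (craig M A C N b j)"
abbreviation "t j \<equiv> ct (craig M A C N b j)"
abbreviation "\<alpha> j \<equiv> calpha (craig M A C N b j)"
abbreviation "\<beta> j \<equiv> cbeta (craig M A C N b j)"
abbreviation "Mi \<equiv> minv M"
abbreviation "Ni \<equiv> minv N"
abbreviation "g j \<equiv> Ni *\<^sub>v (transpose_mat A *\<^sub>v v j + t j) - \<alpha> j \<cdot>\<^sub>v q j"
abbreviation "d j \<equiv> (1 / \<alpha> j) \<cdot>\<^sub>v r j"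

lemma Mc: "M \<in> carrier_mat m m" and Msym: "transpose_mat M = M"
  using Mspd unfolding spd_def by auto
lemma Nc: "N \<in> carrier_mat n n" and Nsym: "transpose_mat N = N"
  using Nspd unfolding spd_def by auto
lemma Cc: "C \<in> carrier_mat n n" and Csym: "transpose_mat C = C"
  using Cp unfolding spsd_def by auto
lemma Mic: "Mi \<in> carrier_mat m m" and MMi: "M * Mi = 1\<^sub>m m"
  using spd_inv[OF Mspd] by auto
lemma Nic: "Ni \<in> carrier_mat n n" and NNi: "N * Ni = 1\<^sub>m n"
  using spd_inv[OF Nspd] by auto

lemma rq0: "q 0 = (1 / \<beta> 0) \<cdot>\<^sub>v (Ni *\<^sub>v b)" by (simp add: Let_def craig.simps)
lemma rb0: "\<beta> 0 = gnorm Ni b" by (simp add: Let_def craig.simps)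
lemma rr0: "r 0 = q 0" by (simp add: Let_def craig.simps)
lemma rw0: "w 0 = Mi *\<^sub>v (A *\<^sub>v q 0)" by (simp add: Let_def craig.simps)
lemma rqS: "q (Suc j) = (1 / \<beta> (Suc j)) \<cdot>\<^sub>v g j" by (simp add: Let_def craig.simps)
lemma rbS: "\<beta> (Suc j) = gnorm N (g j)" by (simp add: Let_def craig.simps)
lemma rwS: "w (Suc j) = Mi *\<^sub>v (A *\<^sub>v q (Suc j)) - \<beta> (Suc j) \<cdot>\<^sub>v v j" by (simp add: Let_def craig.simps)
lemma rrS: "r (Suc j) = q (Suc j) - (\<beta> (Suc j) / \<alpha> j) \<cdot>\<^sub>v r j" by (simp add: Let_def craig.simps)
lemma rs: "s j = C *\<^sub>v r j" by (cases j) (simp_all add: Let_def craig.simps)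
lemma ra: "\<alpha> j = sqrt (w j \<bullet> (M *\<^sub>v w j) + r j \<bullet> s j)" by (cases j) (simp_all add: Let_def craig.simps)
lemma rv: "v j = (1 / \<alpha> j) \<cdot>\<^sub>v w j" by (cases j) (simp_all add: Let_def craig.simps)
lemma rt: "t j = (1 / \<alpha> j) \<cdot>\<^sub>v s j" by (cases j) (simp_all add: Let_def craig.simps)

lemma carr: "q j \<in> carrier_vec n \<and> w j \<in> carrier_vec m \<and> r j \<in> carrier_vec n \<and>
   s j \<in> carrier_vec n \<and> v j \<in> carrier_vec m \<and> t j \<in> carrier_vec n"
proof (induction j)
  case 0
  then show ?case using Mic Nic Ac Cc bc
    by (simp add: rq0 rr0 rw0 rs rv rt del: craig.simps)
next
  case (Suc j)
  then show ?case using Mic Nic Ac Cc bc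
    by (simp add: rqS rrS rwS rs rv rt del: craig.simps)
qed

lemma cq[simp]: "q j \<in> carrier_vec n" and cw[simp]: "w j \<in> carrier_vec m"
  and cr[simp]: "r j \<in> carrier_vec n" and cs[simp]: "s j \<in> carrier_vec n"
  and cv[simp]: "v j \<in> carrier_vec m" and ct[simp]: "t j \<in> carrier_vec n"
  using carr by auto

lemma dims[simp]: "dim_vec (q j) = n" "dim_vec (w j) = m" "dim_vec (r j) = n"
  "dim_vec (s j) = n" "dim_vec (v j) = m" "dim_vec (t j) = n"
  using carr[of j] by auto

lemma cg[simp]: "g j \<in> carrier_vec n" using Nic Ac by simp

lemma wMw_nn: "w j \<bullet> (M *\<^sub>v w j) \<ge> 0"
proof (cases "w j = 0\<^sub>v m")
  case True then show ?thesis using Mc by simp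
next
  case False then show ?thesis using Mspd unfolding spd_def by force
qed

lemma rs_nn: "r j \<bullet> s j \<ge> 0"
  using Cp unfolding spsd_def rs by auto

lemma alpha_sq: "(\<alpha> j)\<^sup>2 = w j \<bullet> (M *\<^sub>v w j) + r j \<bullet> s j"
  using wMw_nn[of j] rs_nn[of j] ra[of j] by simp

lemma t_Cd: "t j = C *\<^sub>v d j"
  unfolding rt rs using mult_mat_vec[OF Cc cr[of j]] by simp

lemma cd[simp]: "d j \<in> carrier_vec n" by simp

lemma I1_0: "\<alpha> 0 \<noteq> 0 \<Longrightarrow> q 0 = \<alpha> 0 \<cdot>\<^sub>v d 0"
  by (intro eq_vecI, auto simp: rr0[symmetric] simp del: craig.simps)

lemma I1_S: assumes "\<alpha> j \<noteq> 0" "\<alpha> (Suc j) \<noteq> 0"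
  shows "q (Suc j) = \<alpha> (Suc j) \<cdot>\<^sub>v d (Suc j) + \<beta> (Suc j) \<cdot>\<^sub>v d j"
  by (intro eq_vecI, insert assms, auto simp: rrS simp del: craig.simps)

lemma MMi_v: "x \<in> carrier_vec m \<Longrightarrow> M *\<^sub>v (Mi *\<^sub>v x) = x"
  using assoc_mult_mat_vec[OF Mc Mic, of x] MMi by simp

lemma NNi_v: "x \<in> carrier_vec n \<Longrightarrow> N *\<^sub>v (Ni *\<^sub>v x) = x"
  using assoc_mult_mat_vec[OF Nc Nic, of x] NNi by simp

lemma Mw0: "M *\<^sub>v w 0 = A *\<^sub>v q 0"
  unfolding rw0 using MMi_v Ac by simp

lemma MwS: "M *\<^sub>v w (Suc j) = A *\<^sub>v q (Suc j) - \<beta> (Suc j) \<cdot>\<^sub>v (M *\<^sub>v v j)"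
proof -
  have "M *\<^sub>v w (Suc j) = M *\<^sub>v (Mi *\<^sub>v (A *\<^sub>v q (Suc j))) - M *\<^sub>v (\<beta> (Suc j) \<cdot>\<^sub>v v j)"
    unfolding rwS by (rule mult_minus_distrib_mat_vec[OF Mc], insert Mic Ac, auto)
  also have "\<dots> = A *\<^sub>v q (Suc j) - \<beta> (Suc j) \<cdot>\<^sub>v (M *\<^sub>v v j)"
    using MMi_v Ac mult_mat_vec[OF Mc cv[of j]] by simp
  finally show ?thesis .
qed

lemma Mv: "M *\<^sub>v v j = (1 / \<alpha> j) \<cdot>\<^sub>v (M *\<^sub>v w j)"
  unfolding rv by (rule mult_mat_vec[OF Mc cw])

lemma I2_0: "\<alpha> 0 \<noteq> 0 \<Longrightarrow> A *\<^sub>v q 0 = \<alpha> 0 \<cdot>\<^sub>v (M *\<^sub>v v 0)"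
  unfolding Mv Mw0 by (intro eq_vecI, insert Ac, auto)

lemma I2_S: "\<alpha> (Suc j) \<noteq> 0 \<Longrightarrow>
   A *\<^sub>v q (Suc j) = \<alpha> (Suc j) \<cdot>\<^sub>v (M *\<^sub>v v (Suc j)) + \<beta> (Suc j) \<cdot>\<^sub>v (M *\<^sub>v v j)"
  unfolding Mv[of "Suc j"] MwS by (intro eq_vecI, insert Ac Mc, auto)

lemma I3_0: "\<alpha> 0 \<noteq> 0 \<Longrightarrow> C *\<^sub>v q 0 = \<alpha> 0 \<cdot>\<^sub>v t 0"
  using I1_0 t_Cd[of 0] mult_mat_vec[OF Cc cd[of 0]] by simp

lemma I3_S: assumes "\<alpha> j \<noteq> 0" "\<alpha> (Suc j) \<noteq> 0"
  shows "C *\<^sub>v q (Suc j) = \<alpha> (Suc j) \<cdot>\<^sub>v t (Suc j) + \<beta> (Suc j) \<cdot>\<^sub>v t j"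
proof -
  have "C *\<^sub>v q (Suc j) = C *\<^sub>v (\<alpha> (Suc j) \<cdot>\<^sub>v d (Suc j)) + C *\<^sub>v (\<beta> (Suc j) \<cdot>\<^sub>v d j)"
    unfolding I1_S[OF assms] by (rule mult_add_distrib_mat_vec[OF Cc], auto)
  also have "\<dots> = \<alpha> (Suc j) \<cdot>\<^sub>v t (Suc j) + \<beta> (Suc j) \<cdot>\<^sub>v t j"
    unfolding t_Cd mult_mat_vec[OF Cc cd] ..
  finally show ?thesis .
qed

abbreviation "X j \<equiv> transpose_mat A *\<^sub>v v j + t j"

lemma cX[simp]: "X j \<in> carrier_vec n" using Ac by simp

lemma I6a: "\<beta> (Suc j) \<noteq> 0 \<Longrightarrow> \<beta> (Suc j) \<cdot>\<^sub>v q (Suc j) = g j"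
  unfolding rqS by (intro eq_vecI, auto simp del: craig.simps)

lemma Ng: "N *\<^sub>v g j = X j - \<alpha> j \<cdot>\<^sub>v (N *\<^sub>v q j)"
proof -
  have "N *\<^sub>v g j = N *\<^sub>v (Ni *\<^sub>v X j) - N *\<^sub>v (\<alpha> j \<cdot>\<^sub>v q j)"
    by (rule mult_minus_distrib_mat_vec[OF Nc], insert Nic, auto)
  thus ?thesis using NNi_v[OF cX] mult_mat_vec[OF Nc cq] by simp
qed

abbreviation "yy i j \<equiv> v i \<bullet> (M *\<^sub>v v j) + d i \<bullet> t j"
abbreviation "qq i j \<equiv> q i \<bullet> (N *\<^sub>v q j)"

lemma td: "t i \<bullet> d j = d i \<bullet> t j"
  unfolding t_Cd by (rule sym_sp2[OF Cc Csym], auto)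

lemma yy_sym: "yy i j = yy j i"
proof -
  have "v i \<bullet> (M *\<^sub>v v j) = v j \<bullet> (M *\<^sub>v v i)" by (rule sym_sp[OF Mc Msym], auto)
  moreover have "d i \<bullet> t j = d j \<bullet> t i" using td[of j i] comm_scalar_prod[of "t j" n "d i"] by simp
  ultimately show ?thesis by simp
qed

lemma qq_sym: "qq i j = qq j i" by (rule sym_sp[OF Nc Nsym], auto)

lemma qX_gen: "q i \<bullet> X j = (A *\<^sub>v q i) \<bullet> v j + (C *\<^sub>v q i) \<bullet> d j"
proof -
  have "q i \<bullet> X j = q i \<bullet> (transpose_mat A *\<^sub>v v j) + q i \<bullet> t j"
    by (rule scalar_prod_add_distrib[of _ n], insert Ac, auto)
  also have "q i \<bullet> (transpose_mat A *\<^sub>v v j) = (A *\<^sub>v q i) \<bullet> v j" by (rule adj_sp[OF Ac], auto)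
  also have "q i \<bullet> t j = (C *\<^sub>v q i) \<bullet> d j" unfolding t_Cd by (rule sym_sp2[OF Cc Csym, symmetric], auto)
  finally show ?thesis .
qed

lemma qX_0: assumes "\<alpha> 0 \<noteq> 0" shows "q 0 \<bullet> X j = \<alpha> 0 * yy 0 j"
proof -
  have "(A *\<^sub>v q 0) \<bullet> v j = \<alpha> 0 * ((M *\<^sub>v v 0) \<bullet> v j)"
    unfolding I2_0[OF assms] using Mc by simp
  moreover have "(C *\<^sub>v q 0) \<bullet> d j = \<alpha> 0 * (t 0 \<bullet> d j)"
    unfolding I3_0[OF assms] by simp
  ultimately show ?thesis unfolding qX_gen td
    using sym_sp2[OF Mc Msym cv[of 0] cv[of j]]
    by (simp add: distrib_left)
qed

lemma qX_S: assumes "\<alpha> i \<noteq> 0" "\<alpha> (Suc i) \<noteq> 0"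
  shows "q (Suc i) \<bullet> X j = \<alpha> (Suc i) * yy (Suc i) j + \<beta> (Suc i) * yy i j"
proof -
  have "(A *\<^sub>v q (Suc i)) \<bullet> v j = \<alpha> (Suc i) * ((M *\<^sub>v v (Suc i)) \<bullet> v j) + \<beta> (Suc i) * ((M *\<^sub>v v i) \<bullet> v j)"
    unfolding I2_S[OF assms(2)] by (subst add_scalar_prod_distrib[of _ m], insert Mc, auto)
  moreover have "(C *\<^sub>v q (Suc i)) \<bullet> d j = \<alpha> (Suc i) * (t (Suc i) \<bullet> d j) + \<beta> (Suc i) * (t i \<bullet> d j)"
    unfolding I3_S[OF assms] by (subst add_scalar_prod_distrib[of _ n], auto)
  ultimately show ?thesis unfolding qX_gen td
    using sym_sp2[OF Mc Msym cv[of "Suc i"] cv[of j]] sym_sp2[OF Mc Msym cv[of i] cv[of j]]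
    by (simp add: distrib_left)
qed

lemma qX_rev: assumes "\<beta> (Suc i) \<noteq> 0" and x: "x \<in> carrier_vec n"
  shows "x \<bullet> X i = \<beta> (Suc i) * (x \<bullet> (N *\<^sub>v q (Suc i))) + \<alpha> i * (x \<bullet> (N *\<^sub>v q i))"
proof -
  have "X i = N *\<^sub>v g i + \<alpha> i \<cdot>\<^sub>v (N *\<^sub>v q i)"
    unfolding Ng by (intro eq_vecI, insert Nc Ac, auto)
  also have "N *\<^sub>v g i = \<beta> (Suc i) \<cdot>\<^sub>v (N *\<^sub>v q (Suc i))"
    unfolding I6a[OF assms(1), symmetric] by (rule mult_mat_vec[OF Nc cq])
  finally have "X i = \<beta> (Suc i) \<cdot>\<^sub>v (N *\<^sub>v q (Suc i)) + \<alpha> i \<cdot>\<^sub>v (N *\<^sub>v q i)" .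
  then show ?thesis using x Nc by (simp add: scalar_prod_add_distrib[of _ n])
qed

lemma gq: "g j \<bullet> (N *\<^sub>v q i) = q i \<bullet> X j - \<alpha> j * qq i j"
proof -
  have "g j \<bullet> (N *\<^sub>v q i) = q i \<bullet> (N *\<^sub>v g j)" by (rule sym_sp[OF Nc Nsym], auto)
  also have "\<dots> = q i \<bullet> X j - \<alpha> j * qq i j" unfolding Ng
    using Nc by (simp add: scalar_prod_minus_distrib[of _ n])
  finally show ?thesis .
qed

lemma qq_S: "\<beta> (Suc j) \<noteq> 0 \<Longrightarrow> \<beta> (Suc j) * qq (Suc j) i = g j \<bullet> (N *\<^sub>v q i)"
  using I6a[of j] Nc by (metis cq mult_mat_vec_carrier smult_scalar_prod_distrib)

lemma qq_SS: assumes "\<beta> (Suc j) \<noteq> 0" shows "qq (Suc j) (Suc j) = 1"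
proof -
  have nn: "g j \<bullet> (N *\<^sub>v g j) \<ge> 0"
  proof (cases "g j = 0\<^sub>v n")
    case True then show ?thesis using Nc by simp
  next
    case False then show ?thesis using Nspd unfolding spd_def by force
  qed
  have b2: "(\<beta> (Suc j))\<^sup>2 = g j \<bullet> (N *\<^sub>v g j)" unfolding rbS gnorm_def using nn by simp
  have "qq (Suc j) (Suc j) = (1 / \<beta> (Suc j)) * ((1 / \<beta> (Suc j)) * (g j \<bullet> (N *\<^sub>v g j)))"
    unfolding rqS using Nc by (simp add: mult_mat_vec[OF Nc cg])
  also have "\<dots> = 1" unfolding b2[symmetric] using assms by (simp add: power2_eq_square)
  finally show ?thesis .
qed

lemma yy_jj: assumes "\<alpha> j \<noteq> 0" shows "yy j j = 1"
proof -
  have "yy j j = (1 / \<alpha> j) * ((1 / \<alpha> j) * (w j \<bullet> (M *\<^sub>v w j))) + (1 / \<alpha> j) * ((1 / \<alpha> j) * (r j \<bullet> s j))"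
    unfolding rv rt using Mc by (simp add: mult_mat_vec[OF Mc cw])
  also have "\<dots> = (1 / \<alpha> j) * (1 / \<alpha> j) * (\<alpha> j)\<^sup>2" unfolding alpha_sq by (simp add: algebra_simps)
  also have "\<dots> = 1" using assms by (simp add: power2_eq_square)
  finally show ?thesis .
qed

lemma beta0_pos: "b \<bullet> (Ni *\<^sub>v b) > 0"
proof -
  let ?x = "Ni *\<^sub>v b"
  have x: "?x \<in> carrier_vec n" using Nic bc by simp
  have Nx: "N *\<^sub>v ?x = b" using NNi_v[OF bc] .
  have "N *\<^sub>v 0\<^sub>v n = 0\<^sub>v n" using Nc by (intro eq_vecI) auto
  hence "?x \<noteq> 0\<^sub>v n" using Nx b0 by auto
  hence "?x \<bullet> (N *\<^sub>v ?x) > 0" using Nspd x unfolding spd_def by auto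
  thus ?thesis unfolding Nx using comm_scalar_prod[OF x bc] by simp
qed

lemma qq_00: "qq 0 0 = 1"
proof -
  have b0p: "\<beta> 0 > 0" unfolding rb0 gnorm_def using beta0_pos by simp
  have b2: "(\<beta> 0)\<^sup>2 = b \<bullet> (Ni *\<^sub>v b)" unfolding rb0 gnorm_def using beta0_pos by simp
  have x: "Ni *\<^sub>v b \<in> carrier_vec n" using Nic bc by simp
  have "qq 0 0 = (1 / \<beta> 0) * ((1 / \<beta> 0) * ((Ni *\<^sub>v b) \<bullet> b))"
    unfolding rq0 using Nc x bc
    by (simp add: mult_mat_vec[OF Nc x] NNi_v[OF bc] smult_scalar_prod_distrib[of _ n] scalar_prod_smult_distrib[of _ n])
  also have "(Ni *\<^sub>v b) \<bullet> b = (\<beta> 0)\<^sup>2" unfolding b2 by (rule comm_scalar_prod[OF x bc])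
  finally show ?thesis using b0p by (simp add: power2_eq_square)
qed

lemma orth:
  assumes al: "\<forall>i<k. \<alpha> i \<noteq> 0" and be: "\<forall>i. 1 \<le> i \<and> i < k \<longrightarrow> \<beta> i \<noteq> 0"
  shows "j < k \<Longrightarrow> \<forall>i i'. i \<le> j \<longrightarrow> i' \<le> j \<longrightarrow>
     qq i i' = (if i = i' then 1 else 0) \<and> yy i i' = (if i = i' then 1 else 0)"
proof (induction j)
  case 0
  then show ?case using qq_00 yy_jj[of 0] al by auto
next
  case (Suc j)
  have IH: "\<And>i i'. i \<le> j \<Longrightarrow> i' \<le> j \<Longrightarrow>
     qq i i' = (if i = i' then 1 else 0) \<and> yy i i' = (if i = i' then 1 else 0)"
    using Suc by auto
  have alj: "\<And>i. i \<le> Suc j \<Longrightarrow> \<alpha> i \<noteq> 0" using al Suc.prems by auto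
  have bej: "\<And>i. 1 \<le> i \<Longrightarrow> i \<le> Suc j \<Longrightarrow> \<beta> i \<noteq> 0" using be Suc.prems by auto
  have bS: "\<beta> (Suc j) \<noteq> 0" using bej by auto
  have A: "qq (Suc j) i = 0" if i: "i \<le> j" for i
  proof -
    have qX: "q i \<bullet> X j = \<alpha> i * (if i = j then 1 else 0)"
    proof (cases i)
      case 0
      then show ?thesis using qX_0[of j] alj IH[of 0 j] by auto
    next
      case (Suc i0)
      have "q i \<bullet> X j = \<alpha> i * yy i j + \<beta> i * yy i0 j"
        unfolding Suc by (rule qX_S, insert alj Suc i, auto)
      then show ?thesis using IH[of i j] IH[of i0 j] Suc i by auto
    qed
    have "\<beta> (Suc j) * qq (Suc j) i = 0"
      unfolding qq_S[OF bS] gq qX using IH[of i j] i by auto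
    then show ?thesis using bS by simp
  qed
  have B: "qq (Suc j) (Suc j) = 1" using qq_SS[OF bS] .
  have C: "yy (Suc j) i = 0" if i: "i \<le> j" for i
  proof -
    have e1: "q (Suc j) \<bullet> X i = \<alpha> (Suc j) * yy (Suc j) i + \<beta> (Suc j) * yy j i"
      by (rule qX_S, insert alj, auto)
    have e2: "q (Suc j) \<bullet> X i = \<beta> (Suc i) * qq (Suc j) (Suc i) + \<alpha> i * qq (Suc j) i"
      by (rule qX_rev, insert bej i, auto)
    have "qq (Suc j) (Suc i) = (if i = j then 1 else 0)"
      using A[of "Suc i"] B i by auto
    hence "\<alpha> (Suc j) * yy (Suc j) i = 0"
      using e1 e2 A[OF i] IH[of j i] i by (cases "i = j") auto
    then show ?thesis using alj[of "Suc j"] by simp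
  qed
  have D: "yy (Suc j) (Suc j) = 1" using yy_jj alj by auto
  show ?case
  proof (intro allI impI)
    fix i i' assume i: "i \<le> Suc j" and i': "i' \<le> Suc j"
    show "qq i i' = (if i = i' then 1 else 0) \<and> yy i i' = (if i = i' then 1 else 0)"
    proof (cases "i = Suc j")
      case True
      then show ?thesis using A[of i'] C[of i'] B D i' by (cases "i' = Suc j") auto
    next
      case False
      hence ij: "i \<le> j" using i by auto
      show ?thesis
      proof (cases "i' = Suc j")
        case True
        then show ?thesis using A[OF ij] C[OF ij] qq_sym[of i i'] yy_sym[of i i'] ij by auto
      next
        case False
        then show ?thesis using IH[OF ij] i' by auto
      qed
    qed
  qed
qed

context
  fixes k :: nat
  assumes k1: "k \<ge> 1" and al: "\<forall>j<k. \<alpha> j \<noteq> 0" and be: "\<forall>j. 1 \<le> j \<and> j < k \<longrightarrow> \<beta> j \<noteq> 0"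
begin

abbreviation "QQ \<equiv> mat_of_cols n (map (\<lambda>j. q j) [0..<k])"
abbreviation "VV \<equiv> mat_of_cols m (map (\<lambda>j. v j) [0..<k])"
abbreviation "TT \<equiv> mat_of_cols n (map (\<lambda>j. t j) [0..<k])"
abbreviation "DD \<equiv> mat_of_cols n (map (\<lambda>j. (1 / \<alpha> j) \<cdot>\<^sub>v r j) [0..<k])"
abbreviation "BB \<equiv> mat k k (\<lambda>(i, j). if j = i then \<alpha> i else if j = i + 1 then \<beta> j else 0)"

lemma BBc[simp]: "BB \<in> carrier_mat k k" by simp

lemma BB_idx[simp]: "i < k \<Longrightarrow> j < k \<Longrightarrow> BB $$ (i, j) = (if j = i then \<alpha> i else if j = Suc i then \<beta> j else 0)"
  by simp

lemma colB: 
  assumes f: "\<And>l. f l \<in> carrier_vec nr" and j: "j < k"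
  shows "mat_of_cols nr (map f [0..<k]) *\<^sub>v col BB j = \<alpha> j \<cdot>\<^sub>v f j + (if 0 < j then \<beta> j \<cdot>\<^sub>v f (j - 1) else 0\<^sub>v nr)"
proof -
  have fd: "\<And>l. dim_vec (f l) = nr" using f by auto
  show ?thesis
proof (rule eq_vecI)
  show "dim_vec (mat_of_cols nr (map f [0..<k]) *\<^sub>v col BB j) = dim_vec (\<alpha> j \<cdot>\<^sub>v f j + (if 0 < j then \<beta> j \<cdot>\<^sub>v f (j - 1) else 0\<^sub>v nr))"
    using fd by simp
  fix i assume "i < dim_vec (\<alpha> j \<cdot>\<^sub>v f j + (if 0 < j then \<beta> j \<cdot>\<^sub>v f (j - 1) else 0\<^sub>v nr))"
  hence i: "i < nr" using fd by (simp split: if_splits)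
  have "(mat_of_cols nr (map f [0..<k]) *\<^sub>v col BB j) $ i = (\<Sum>l = 0..<k. f l $ i * (if j = l then \<alpha> l else if j = Suc l then \<beta> j else 0))"
    using i j f by (auto simp: mat_of_cols_def scalar_prod_def intro!: sum.cong)
  also have "\<dots> = f j $ i * \<alpha> j + (if 0 < j then f (j - 1) $ i * \<beta> j else 0)"
    by (rule sumB1[OF j])
  finally show "(mat_of_cols nr (map f [0..<k]) *\<^sub>v col BB j) $ i = (\<alpha> j \<cdot>\<^sub>v f j + (if 0 < j then \<beta> j \<cdot>\<^sub>v f (j - 1) else 0\<^sub>v nr)) $ i"
    using i fd by (simp add: mult.commute)
qed
qed

lemma rowB: 
  assumes f: "\<And>l. f l \<in> carrier_vec nr" and j: "j < k"
  shows "mat_of_cols nr (map f [0..<k]) *\<^sub>v row BB j = \<alpha> j \<cdot>\<^sub>v f j + (if Suc j < k then \<beta> (Suc j) \<cdot>\<^sub>v f (Suc j) else 0\<^sub>v nr)"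
proof -
  have fd: "\<And>l. dim_vec (f l) = nr" using f by auto
  show ?thesis
proof (rule eq_vecI)
  show "dim_vec (mat_of_cols nr (map f [0..<k]) *\<^sub>v row BB j) = dim_vec (\<alpha> j \<cdot>\<^sub>v f j + (if Suc j < k then \<beta> (Suc j) \<cdot>\<^sub>v f (Suc j) else 0\<^sub>v nr))"
    using fd by simp
  fix i assume "i < dim_vec (\<alpha> j \<cdot>\<^sub>v f j + (if Suc j < k then \<beta> (Suc j) \<cdot>\<^sub>v f (Suc j) else 0\<^sub>v nr))"
  hence i: "i < nr" using fd by (simp split: if_splits)
  have "(mat_of_cols nr (map f [0..<k]) *\<^sub>v row BB j) $ i = (\<Sum>l = 0..<k. f l $ i * (if l = j then \<alpha> j else if l = Suc j then \<beta> l else 0))"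
    using i j f by (auto simp: mat_of_cols_def scalar_prod_def intro!: sum.cong)
  also have "\<dots> = f j $ i * \<alpha> j + (if Suc j < k then f (Suc j) $ i * \<beta> (Suc j) else 0)"
    by (rule sumB2[OF j])
  finally show "(mat_of_cols nr (map f [0..<k]) *\<^sub>v row BB j) $ i = (\<alpha> j \<cdot>\<^sub>v f j + (if Suc j < k then \<beta> (Suc j) \<cdot>\<^sub>v f (Suc j) else 0\<^sub>v nr)) $ i"
    using i fd by (simp add: mult.commute)
qed
qed


lemma QQc[simp]: "QQ \<in> carrier_mat n k" and VVc[simp]: "VV \<in> carrier_mat m k"
  and TTc[simp]: "TT \<in> carrier_mat n k" and DDc[simp]: "DD \<in> carrier_mat n k"
  by (metis length_map length_upt minus_nat.diff_0 mat_of_cols_carrier(1))+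

lemma colQ[simp]: "j < k \<Longrightarrow> col QQ j = q j" by simp
lemma colV[simp]: "j < k \<Longrightarrow> col VV j = v j" by simp
lemma colT[simp]: "j < k \<Longrightarrow> col TT j = t j" by simp
lemma colD[simp]: "j < k \<Longrightarrow> col DD j = d j" by simp

lemma alk: "j < k \<Longrightarrow> \<alpha> j \<noteq> 0" using al by auto

lemma P1: "QQ = DD * BB"
proof (rule mat_col_eqI)
  fix j assume "j < dim_col (DD * BB)"
  hence j: "j < k" by simp
  have "col (DD * BB) j = \<alpha> j \<cdot>\<^sub>v d j + (if 0 < j then \<beta> j \<cdot>\<^sub>v d (j - 1) else 0\<^sub>v n)"
    using col_mult2[OF DDc BBc j] colB[of "\<lambda>j. (1 / \<alpha> j) \<cdot>\<^sub>v r j" n j] j by simp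
  also have "\<dots> = q j"
  proof (cases j)
    case 0 then show ?thesis using I1_0 alk j by simp
  next
    case (Suc j0) then show ?thesis using I1_S[of j0] alk j by simp
  qed
  finally show "col QQ j = col (DD * BB) j" using j by simp
qed auto

lemma P2: "A * QQ = M * VV * BB"
proof (rule mat_col_eqI)
  fix j assume "j < dim_col (M * VV * BB)"
  hence j: "j < k" by simp
  have "col (M * VV * BB) j = M *\<^sub>v (VV *\<^sub>v col BB j)"
    using assoc_mult_mat[OF Mc VVc BBc] col_mult2[OF Mc _ j, of "VV * BB"] col_mult2[OF VVc BBc j] mult_carrier_mat[OF VVc BBc] by simp
  also have "\<dots> = M *\<^sub>v (\<alpha> j \<cdot>\<^sub>v v j + (if 0 < j then \<beta> j \<cdot>\<^sub>v v (j - 1) else 0\<^sub>v m))"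
    using colB[of v m j] j by simp
  also have "\<dots> = \<alpha> j \<cdot>\<^sub>v (M *\<^sub>v v j) + (if 0 < j then \<beta> j \<cdot>\<^sub>v (M *\<^sub>v v (j - 1)) else 0\<^sub>v m)"
    using Mc by (auto simp: mult_add_distrib_mat_vec[OF Mc] mult_mat_vec[OF Mc])
  also have "\<dots> = A *\<^sub>v q j"
  proof (cases j)
    case 0 then show ?thesis using I2_0 alk j Mc by simp
  next
    case (Suc j0) then show ?thesis using I2_S[of j0] alk j by simp
  qed
  finally show "col (A * QQ) j = col (M * VV * BB) j" using j col_mult2[OF Ac QQc j] by simp
qed (insert Ac Mc, auto)

lemma P3: "C * QQ = TT * BB"
proof (rule mat_col_eqI)
  fix j assume "j < dim_col (TT * BB)"
  hence j: "j < k" by simp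
  have "col (TT * BB) j = \<alpha> j \<cdot>\<^sub>v t j + (if 0 < j then \<beta> j \<cdot>\<^sub>v t (j - 1) else 0\<^sub>v n)"
    using col_mult2[OF TTc BBc j] colB[of t n j] j by simp
  also have "\<dots> = C *\<^sub>v q j"
  proof (cases j)
    case 0 then show ?thesis using I3_0 alk j by simp
  next
    case (Suc j0) then show ?thesis using I3_S[of j0] alk j by simp
  qed
  finally show "col (C * QQ) j = col (TT * BB) j" using j col_mult2[OF Cc QQc j] by simp
qed (insert Cc, auto)

lemma orth_k: "i < k \<Longrightarrow> j < k \<Longrightarrow>
   qq i j = (if i = j then 1 else 0) \<and> yy i j = (if i = j then 1 else 0)"
  using orth[OF al be, of "max i j"] by (simp add: max_def)

lemma P4: "transpose_mat VV * M * VV + transpose_mat DD * TT = 1\<^sub>m k"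
proof (rule eq_matI)
  fix i j assume "i < dim_row (1\<^sub>m k :: real mat)" "j < dim_col (1\<^sub>m k :: real mat)"
  hence i: "i < k" and j: "j < k" by auto
  have VT: "transpose_mat VV \<in> carrier_mat k m" by simp
  have DT: "transpose_mat DD \<in> carrier_mat k n" by simp
  have e1: "(transpose_mat VV * M * VV) $$ (i, j) = v i \<bullet> (M *\<^sub>v v j)"
    unfolding assoc_mult_mat[OF VT Mc VVc] using i j col_mult2[OF Mc VVc j] VT Mc
    by (subst index_mult_mat, auto)
  have e2: "(transpose_mat DD * TT) $$ (i, j) = d i \<bullet> t j"
    using i j DT by (subst index_mult_mat, auto)
  show "(transpose_mat VV * M * VV + transpose_mat DD * TT) $$ (i, j) = 1\<^sub>m k $$ (i, j)"
    using e1 e2 orth_k[OF i j] i j VT DT Mc by simp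
qed (insert Mc, auto)

lemma P5: "transpose_mat QQ * N * QQ = 1\<^sub>m k"
proof (rule eq_matI)
  fix i j assume "i < dim_row (1\<^sub>m k :: real mat)" "j < dim_col (1\<^sub>m k :: real mat)"
  hence i: "i < k" and j: "j < k" by auto
  have QT: "transpose_mat QQ \<in> carrier_mat k n" by simp
  have e1: "(transpose_mat QQ * N * QQ) $$ (i, j) = q i \<bullet> (N *\<^sub>v q j)"
    unfolding assoc_mult_mat[OF QT Nc QQc] using i j col_mult2[OF Nc QQc j] QT Nc
    by (subst index_mult_mat, auto)
  show "(transpose_mat QQ * N * QQ) $$ (i, j) = 1\<^sub>m k $$ (i, j)"
    using e1 orth_k[OF i j] i j by simp
qed (insert Nc, auto)


abbreviation "GG \<equiv> mat_of_cols n [craig_g M A C N b k]"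
abbreviation "EE \<equiv> mat_of_rows k [unit_vec k (k - 1)]"

lemma cgk: "craig_g M A C N b k = g (k - 1)" by (simp add: craig_g_def Let_def)

lemma GGc[simp]: "GG \<in> carrier_mat n 1" and EEc[simp]: "EE \<in> carrier_mat 1 k"
  using mat_of_cols_carrier(1)[of n "[craig_g M A C N b k]"] mat_of_rows_carrier(1)[of k "[unit_vec k (k - 1)]"]
  by simp_all

lemma GEcol: assumes j: "j < k" shows "GG *\<^sub>v col EE j = (if j = k - 1 then g (k - 1) else 0\<^sub>v n)"
proof (rule eq_vecI)
  fix i assume "i < dim_vec (if j = k - 1 then g (k - 1) else 0\<^sub>v n)"
  hence i: "i < n" by (simp split: if_splits)
  show "(GG *\<^sub>v col EE j) $ i = (if j = k - 1 then g (k - 1) else 0\<^sub>v n) $ i"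
    using i j cg[of "k - 1"] by (simp add: mat_of_cols_def mat_of_rows_def scalar_prod_def cgk)
qed simp

lemma P6: "transpose_mat A * VV + TT = N * QQ * transpose_mat BB + N * (GG * EE)"
proof (rule mat_col_eqI)
  have Atc: "transpose_mat A \<in> carrier_mat n m" using Ac by simp
  have BTc: "transpose_mat BB \<in> carrier_mat k k" by simp
  fix j assume "j < dim_col (N * QQ * transpose_mat BB + N * (GG * EE))"
  hence j: "j < k" by simp
  have l: "col (transpose_mat A * VV + TT) j = X j"
    using col_add[OF mult_carrier_mat[OF Atc VVc] TTc j] col_mult2[OF Atc VVc j] j by simp
  have c1: "col (N * QQ * transpose_mat BB) j = N *\<^sub>v (QQ *\<^sub>v row BB j)"
    using assoc_mult_mat[OF Nc QQc BTc] col_mult2[OF Nc mult_carrier_mat[OF QQc BTc] j]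
      col_mult2[OF QQc BTc j] j by simp
  have c2: "col (N * (GG * EE)) j = N *\<^sub>v (GG *\<^sub>v col EE j)"
    using col_mult2[OF Nc mult_carrier_mat[OF GGc EEc] j] col_mult2[OF GGc EEc j] by simp
  have sum: "QQ *\<^sub>v row BB j + GG *\<^sub>v col EE j = \<alpha> j \<cdot>\<^sub>v q j + g j"
  proof (cases "Suc j < k")
    case True
    have "\<beta> (Suc j) \<noteq> 0" using be True by auto
    then show ?thesis using True rowB[of q n j] GEcol[OF j] j I6a[of j] by auto
  next
    case False
    hence "j = k - 1" using j by auto
    then show ?thesis using False rowB[of q n j] GEcol[OF j] j by auto
  qed
  have ce: "col EE j \<in> carrier_vec 1" using col_dim[of EE j] EEc by (metis carrier_matD(1))
  have rb: "row BB j \<in> carrier_vec k" using row_carrier[of BB j] BBc by (simp only: carrier_matD)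
  have x1: "QQ *\<^sub>v row BB j \<in> carrier_vec n" using mult_mat_vec_carrier[OF QQc rb] .
  have x2: "GG *\<^sub>v col EE j \<in> carrier_vec n" using mult_mat_vec_carrier[OF GGc ce] .
  have "col (N * QQ * transpose_mat BB + N * (GG * EE)) j = N *\<^sub>v (QQ *\<^sub>v row BB j) + N *\<^sub>v (GG *\<^sub>v col EE j)"
    unfolding col_add[OF mult_carrier_mat[OF mult_carrier_mat[OF Nc QQc] BTc] mult_carrier_mat[OF Nc mult_carrier_mat[OF GGc EEc]] j]
      c1 c2 ..
  also have "\<dots> = N *\<^sub>v (\<alpha> j \<cdot>\<^sub>v q j + g j)"
    unfolding sum[symmetric] by (rule mult_add_distrib_mat_vec[OF Nc x1 x2, symmetric])
  also have "\<dots> = X j"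
  proof -
    have "N *\<^sub>v (\<alpha> j \<cdot>\<^sub>v q j + g j) = \<alpha> j \<cdot>\<^sub>v (N *\<^sub>v q j) + N *\<^sub>v g j"
      using mult_add_distrib_mat_vec[OF Nc, of "\<alpha> j \<cdot>\<^sub>v q j" "g j"] mult_mat_vec[OF Nc cq] by simp
    also have "\<dots> = X j" unfolding Ng by (intro eq_vecI, insert Nc Ac, auto)
    finally show ?thesis .
  qed
  finally have r: "col (N * QQ * transpose_mat BB + N * (GG * EE)) j = X j" .
  show "col (transpose_mat A * VV + TT) j = col (N * QQ * transpose_mat BB + N * (GG * EE)) j"
    unfolding l r ..
next
  have h1: "transpose_mat A * VV + TT \<in> carrier_mat n k" by (rule add_carrier_mat[OF TTc])
  have h2: "N * QQ * transpose_mat BB + N * (GG * EE) \<in> carrier_mat n k"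
    by (rule add_carrier_mat[OF mult_carrier_mat[OF Nc mult_carrier_mat[OF GGc EEc]]])
  show "dim_row (transpose_mat A * VV + TT) = dim_row (N * QQ * transpose_mat BB + N * (GG * EE))"
    "dim_col (transpose_mat A * VV + TT) = dim_col (N * QQ * transpose_mat BB + N * (GG * EE))"
    by (simp only: carrier_matD[OF h1] carrier_matD[OF h2])+
qed

lemma EB: "EE * BB = \<alpha> (k - 1) \<cdot>\<^sub>m EE"
proof (rule eq_matI)
  fix i j assume "i < dim_row (\<alpha> (k - 1) \<cdot>\<^sub>m EE)" "j < dim_col (\<alpha> (k - 1) \<cdot>\<^sub>m EE)"
  hence i: "i = 0" and j: "j < k" by auto
  have k0: "k - 1 < k" using k1 by simp
  have "(EE * BB) $$ (i, j) = unit_vec k (k - 1) \<bullet> col BB j"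
    using i j by (subst index_mult_mat, auto)
  also have "\<dots> = BB $$ (k - 1, j)" using scalar_prod_left_unit[of "col BB j" k "k - 1"] k0 j by simp
  also have "\<dots> = (\<alpha> (k - 1) \<cdot>\<^sub>m EE) $$ (i, j)"
    using i j k0 by (auto simp: mat_of_rows_def)
  finally show "(EE * BB) $$ (i, j) = (\<alpha> (k - 1) \<cdot>\<^sub>m EE) $$ (i, j)" .
next
  have h1: "EE * BB \<in> carrier_mat 1 k" by (rule mult_carrier_mat[OF EEc BBc])
  have h2: "\<alpha> (k - 1) \<cdot>\<^sub>m EE \<in> carrier_mat 1 k" by (rule smult_carrier_mat[OF EEc])
  show "dim_row (EE * BB) = dim_row (\<alpha> (k - 1) \<cdot>\<^sub>m EE)"
    "dim_col (EE * BB) = dim_col (\<alpha> (k - 1) \<cdot>\<^sub>m EE)"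
    by (simp only: carrier_matD[OF h1] carrier_matD[OF h2])+
qed

lemma P7: "Ni * (transpose_mat A * Mi * A + C) * QQ = QQ * (transpose_mat BB * BB) + \<alpha> (k - 1) \<cdot>\<^sub>m (GG * EE)"
proof -
  have Atc: "transpose_mat A \<in> carrier_mat n m" using Ac by simp
  have BTc: "transpose_mat BB \<in> carrier_mat k k" by simp
  have AMi: "transpose_mat A * Mi \<in> carrier_mat n m" using Atc Mic by simp
  have AMA: "transpose_mat A * Mi * A \<in> carrier_mat n n" using AMi Ac by simp
  have SS: "transpose_mat A * Mi * A + C \<in> carrier_mat n n" using AMA Cc by simp
  have MiM: "Mi * M = 1\<^sub>m m" using spd_inv[OF Mspd] by simp
  have NiN: "Ni * N = 1\<^sub>m n" using spd_inv[OF Nspd] by simp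
  have VB: "VV * BB \<in> carrier_mat m k" by (rule mult_carrier_mat[OF VVc BBc])
  have GE: "GG * EE \<in> carrier_mat n k" by (rule mult_carrier_mat[OF GGc EEc])
  have e1: "transpose_mat A * Mi * A * QQ = transpose_mat A * VV * BB"
  proof -
    have "transpose_mat A * Mi * A * QQ = transpose_mat A * Mi * (M * (VV * BB))"
      using assoc_mult_mat[OF AMi Ac QQc] P2 assoc_mult_mat[OF Mc VVc BBc] by simp
    also have "\<dots> = transpose_mat A * (Mi * M * (VV * BB))"
      using assoc_mult_mat[OF Atc Mic mult_carrier_mat[OF Mc VB]] assoc_mult_mat[OF Mic Mc VB] by simp
    also have "\<dots> = transpose_mat A * (VV * BB)" unfolding MiM using VB by simp
    also have "\<dots> = transpose_mat A * VV * BB" using assoc_mult_mat[OF Atc VVc BBc] by simp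
    finally show ?thesis .
  qed
  have "(transpose_mat A * Mi * A + C) * QQ = transpose_mat A * VV * BB + TT * BB"
    using add_mult_distrib_mat[OF AMA Cc QQc] e1 P3 by simp
  also have "\<dots> = (transpose_mat A * VV + TT) * BB"
    using add_mult_distrib_mat[OF mult_carrier_mat[OF Atc VVc] TTc BBc] by simp
  also have "\<dots> = (N * QQ * transpose_mat BB + N * (GG * EE)) * BB" unfolding P6 ..
  also have "\<dots> = N * QQ * transpose_mat BB * BB + N * (GG * EE) * BB"
    using add_mult_distrib_mat[OF mult_carrier_mat[OF mult_carrier_mat[OF Nc QQc] BTc] mult_carrier_mat[OF Nc GE] BBc] .
  also have "N * QQ * transpose_mat BB * BB = N * (QQ * (transpose_mat BB * BB))"
    using assoc_mult_mat[OF mult_carrier_mat[OF Nc QQc] BTc BBc] assoc_mult_mat[OF Nc QQc mult_carrier_mat[OF BTc BBc]] by simp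
  also have "N * (GG * EE) * BB = N * (\<alpha> (k - 1) \<cdot>\<^sub>m (GG * EE))"
    using assoc_mult_mat[OF Nc GE BBc] assoc_mult_mat[OF GGc EEc BBc] EB mult_smult_distrib[OF GGc EEc] by simp
  also have "N * (QQ * (transpose_mat BB * BB)) + N * (\<alpha> (k - 1) \<cdot>\<^sub>m (GG * EE)) =
     N * (QQ * (transpose_mat BB * BB) + \<alpha> (k - 1) \<cdot>\<^sub>m (GG * EE))"
    using mult_add_distrib_mat[OF Nc mult_carrier_mat[OF QQc mult_carrier_mat[OF BTc BBc]], of "\<alpha> (k - 1) \<cdot>\<^sub>m (GG * EE)"] GE by simp
  finally have "(transpose_mat A * Mi * A + C) * QQ = N * (QQ * (transpose_mat BB * BB) + \<alpha> (k - 1) \<cdot>\<^sub>m (GG * EE))" .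
  hence "Ni * (transpose_mat A * Mi * A + C) * QQ = Ni * N * (QQ * (transpose_mat BB * BB) + \<alpha> (k - 1) \<cdot>\<^sub>m (GG * EE))"
    using assoc_mult_mat[OF Nic SS QQc] assoc_mult_mat[OF Nic Nc, of "QQ * (transpose_mat BB * BB) + \<alpha> (k - 1) \<cdot>\<^sub>m (GG * EE)" k] GE
    by simp
  also have "\<dots> = QQ * (transpose_mat BB * BB) + \<alpha> (k - 1) \<cdot>\<^sub>m (GG * EE)" unfolding NiN using GE by simp
  finally show ?thesis .
qed

end

end

theorem mainTheorem2:
  fixes m n k :: nat and M A C N :: "real mat" and b :: "real vec"
  assumes "n \<le> m"
    and "spd m M" and "full_col_rank m n A" and "spsd n C" and "spd n N"
    and "b \<in> carrier_vec n" and "b \<noteq> 0\<^sub>v n"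
    and "k \<ge> 1"
    and "\<forall>j<k. calpha (craig M A C N b j) \<noteq> 0"
    and "\<forall>j. 1 \<le> j \<and> j < k \<longrightarrow> cbeta (craig M A C N b j) \<noteq> 0"
  defines "Q \<equiv> mat_of_cols n (map (\<lambda>j. cq (craig M A C N b j)) [0..<k])"
    and "V \<equiv> mat_of_cols m (map (\<lambda>j. cv (craig M A C N b j)) [0..<k])"
    and "T \<equiv> mat_of_cols n (map (\<lambda>j. ct (craig M A C N b j)) [0..<k])"
    and "D \<equiv> mat_of_cols n (map (\<lambda>j. (1 / calpha (craig M A C N b j)) \<cdot>\<^sub>v cr (craig M A C N b j)) [0..<k])"
    and "B \<equiv> mat k k (\<lambda>(i, j). if j = i then calpha (craig M A C N b i)
                              else if j = i + 1 then cbeta (craig M A C N b j) else 0)"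
  shows "Q = D * B \<and>
         A * Q = M * V * B \<and>
         C * Q = T * B \<and>
         transpose_mat V * M * V + transpose_mat D * T = 1\<^sub>m k \<and>
         transpose_mat Q * N * Q = 1\<^sub>m k \<and>
         transpose_mat A * V + T = N * Q * transpose_mat B + N * (mat_of_cols n [craig_g M A C N b k] * mat_of_rows k [unit_vec k (k - 1)]) \<and>
         minv N * (transpose_mat A * minv M * A + C) * Q = Q * (transpose_mat B * B) + calpha (craig M A C N b (k - 1)) \<cdot>\<^sub>m (mat_of_cols n [craig_g M A C N b k] * mat_of_rows k [unit_vec k (k - 1)])"
proof -
  have Ac: "A \<in> carrier_mat m n" using assms(3) unfolding full_col_rank_def by auto
  interpret crg m n M A C N b
    by (unfold_locales, insert assms Ac, auto)
  note hyps = assms(8) assms(9) assms(10)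
  show ?thesis unfolding Q_def V_def T_def D_def B_def
    using P1[OF hyps] P2[OF hyps] P3[OF hyps] P4[OF hyps] P5[OF hyps] P6[OF hyps] P7[OF hyps]
    by blast
qed

end
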